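(* For every integer $n\ge 0$, $$\Phi^{(2)}[a; bq^n, b'; c, c'; x, y] = \sum_{k=0}^n \begin{bmatrix} n \\ k \end{bmatrix} q^{2\binom{k}{2}} \frac{(bx)^k (a; q)_k}{(c; q)_k} \Phi^{(2)}[aq^k; bq^k, b'; cq^k, c'; x, y]$$ and $$\Phi^{(2)}[a; bq^{-n}, b'; c, c'; x, y] = \sum_{k=0}^n \begin{bmatrix} n \\ k \end{bmatrix} q^{\binom{k}{2} - nk} \frac{(-bx)^k (a; q)_k}{(c; q)_k} \Phi^{(2)}[aq^k; b, b'; cq^k, c'; x, y].$$
   Context: Let $q$ be a complex number with $0<|q|<1$. For complex $z$ and integer $m\ge 0$, $(z;q)_m=\prod_{j=0}^{m-1}(1-zq^j)$, with $(z;q)_0=1$. For integers $0\le k\le n$, $\begin{bmatrix} n \\ k \end{bmatrix}=\frac{(q;q)_n}{(q;q)_k(q;q)_{n-k}}$ is the $q$-binomial coefficient. The $q$-Appell function $\Phi^{(2)}$ is $$\Phi^{(2)}[a; b, b'; c, c'; x, y] = \sum_{m, n \geq 0} \frac{(a; q)_{m+n} (b; q)_m (b'; q)_n}{(q; q)_m (q; q)_n (c; q)_m (c'; q)_n} x^m y^n.$$ Identities are understood as identities of power series in $x,y$ (formal, or convergent for small $|x|,|y|$), with complex parameters chosen so that no denominator occurring vanishes. *)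

theory Defs
  imports "HOL-Analysis.Analysis"
begin

definition qpoch :: "complex \<Rightarrow> complex \<Rightarrow> nat \<Rightarrow> complex" where
  "qpoch z q m = (\<Prod>j<m. 1 - z * q ^ j)"

definition qbinom :: "complex \<Rightarrow> nat \<Rightarrow> nat \<Rightarrow> complex" where
  "qbinom q n k = qpoch q q n / (qpoch q q k * qpoch q q (n - k))"

definition Phi2 :: "complex \<Rightarrow> complex \<Rightarrow> complex \<Rightarrow> complex \<Rightarrow> complex \<Rightarrow> complex \<Rightarrow>
    complex \<Rightarrow> complex \<Rightarrow> complex" where
  "Phi2 q a b b' c c' x y =
     (\<Sum>\<^sub>\<infinity>(m, n) \<in> UNIV.
        qpoch a q (m + n) * qpoch b q m * qpoch b' q n /
        (qpoch q q m * qpoch q q n * qpoch c q m * qpoch c' q n) * x ^ m * y ^ n)"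

end

theory Submission
  imports Defs
begin

lemma qpoch_0[simp]: "qpoch z q 0 = 1" by (simp add: qpoch_def)

lemma qpoch_Suc: "qpoch z q (Suc m) = qpoch z q m * (1 - z * q ^ m)"
  by (simp add: qpoch_def)

lemma qpoch_Suc': "qpoch z q (Suc m) = (1 - z) * qpoch (z * q) q m"
  unfolding qpoch_def by (subst prod.lessThan_Suc_shift) (simp add: mult.assoc)

lemma qpoch_add: "qpoch z q (m + k) = qpoch z q k * qpoch (z * q ^ k) q m"
  by (induction m) (simp_all add: qpoch_Suc power_add mult_ac)

lemma qpoch_q_nz:
  assumes "norm q < 1" shows "qpoch q q m \<noteq> 0"
proof -
  have "1 - q * q ^ j \<noteq> 0" for j
  proof
    assume "1 - q * q ^ j = 0"
    then have "q ^ Suc j = 1" by simp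
    then have "norm q ^ Suc j = 1" by (metis norm_one norm_power)
    moreover have "norm q ^ Suc j < 1"
    proof -
      have "norm q ^ j \<le> 1" using assms by (simp add: power_le_one)
      then have "norm q * norm q ^ j \<le> norm q" by (simp add: mult_left_le)
      then show ?thesis using assms by simp
    qed
    ultimately show False by simp
  qed
  then show ?thesis unfolding qpoch_def by simp
qed

lemma norm_qpoch_le:
  assumes "norm q \<le> 1" shows "norm (qpoch z q m) \<le> (1 + norm z) ^ m"
proof (induction m)
  case (Suc m)
  have "norm (1 - z * q ^ m) \<le> 1 + norm z"
  proof -
    have "norm (z * q ^ m) \<le> norm z"
      using assms by (simp add: norm_mult norm_power mult_left_le power_le_one)
    then show ?thesis using norm_triangle_ineq4[of 1 "z * q ^ m"] by simp
  qed
  then have "norm (qpoch z q m) * norm (1 - z * q ^ m) \<le> (1 + norm z) ^ m * (1 + norm z)"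
    using Suc by (intro mult_mono) auto
  then show ?case
    by (simp add: qpoch_Suc norm_mult mult.commute)
qed simp

lemma qpoch_lower:
  assumes q: "norm q < 1" and nz: "\<forall>m. qpoch c q m \<noteq> 0"
  shows "\<exists>d>0. \<forall>m. d / 2 ^ m \<le> norm (qpoch c q m)"
proof -
  obtain M where M: "norm q ^ M < 1 / (2 * (norm c + 1))"
    using real_arch_pow_inv[of "1 / (2 * (norm c + 1))" "norm q"] q
    by (smt (verit) divide_pos_pos norm_ge_zero)
  define d where "d = Min ((\<lambda>j. norm (qpoch c q j)) ` {..M})"
  have dpos: "d > 0" unfolding d_def using nz by (subst Min_gr_iff) auto
  have dle: "d \<le> norm (qpoch c q j)" if "j \<le> M" for j
    unfolding d_def using that by (intro Min_le) auto
  have key: "norm (c * q ^ m) \<le> 1 / 2" if "m \<ge> M" for m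
  proof -
    have "norm q ^ m \<le> norm q ^ M" using that q by (simp add: power_decreasing)
    then have "norm q ^ m < 1 / (2 * (norm c + 1))" using M by simp
    then have "norm c * norm q ^ m \<le> (norm c + 1) * (1 / (2 * (norm c + 1)))"
      by (intro mult_mono) auto
    also have "\<dots> = 1/2" proof -
      have h: "2 + norm c * 2 \<noteq> 0" using norm_ge_zero[of c] by linarith
      show ?thesis using h by (simp add: field_simps)
    qed
    finally show ?thesis by (simp add: norm_mult norm_power)
  qed
  have "d / 2 ^ m \<le> norm (qpoch c q m)" for m
  proof (induction m)
    case 0 then show ?case using dle[of 0] by simp
  next
    case (Suc m)
    show ?case
    proof (cases "Suc m \<le> M")
      case True
      have "(1::real) \<le> 2 ^ Suc m" by (rule one_le_power) simp
      then have "d / 2 ^ Suc m \<le> d" using dpos by (simp add: divide_le_eq)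
      then show ?thesis using dle[OF True] by simp
    next
      case False
      then have "norm (1 - c * q ^ m) \<ge> 1/2"
        using key[of m] norm_triangle_ineq2[of 1 "c * q ^ m"] by simp
      then have "d / 2 ^ m * (1/2) \<le> norm (qpoch c q m) * norm (1 - c * q ^ m)"
        using Suc dpos by (intro mult_mono) auto
      then show ?thesis by (simp add: qpoch_Suc norm_mult)
    qed
  qed
  then show ?thesis using dpos by blast
qed

definition trm :: "complex \<Rightarrow> complex \<Rightarrow> complex \<Rightarrow> complex \<Rightarrow> complex \<Rightarrow> complex \<Rightarrow>
    complex \<Rightarrow> complex \<Rightarrow> nat \<times> nat \<Rightarrow> complex" where
  "trm q a b b' c c' x y = (\<lambda>(m, n).
        qpoch a q (m + n) * qpoch b q m * qpoch b' q n /
        (qpoch q q m * qpoch q q n * qpoch c q m * qpoch c' q n) * x ^ m * y ^ n)"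

lemma Phi2_trm: "Phi2 q a b b' c c' x y = infsum (trm q a b b' c c' x y) UNIV"
  unfolding Phi2_def trm_def ..

definition RR :: "real \<Rightarrow> real \<Rightarrow> real \<Rightarrow> real" where
  "RR A B B' = 1 / (4 * (1 + A) * (1 + B) * (1 + B'))"

lemma geom2_summable:
  fixes C u v :: real
  assumes "C \<ge> 0" "0 \<le> u" "u < 1" "0 \<le> v" "v < 1"
  shows "(\<lambda>(m,n). C * u ^ m * v ^ n) summable_on UNIV"
proof -
  have "(\<lambda>(m,n). C * u ^ m * v ^ n) summable_on Sigma UNIV (\<lambda>_. UNIV)"
  proof (rule summable_on_SigmaI)
    fix m :: nat
    have "(\<lambda>n. (C * u ^ m) * v ^ n) sums ((C * u ^ m) * (1 / (1 - v)))"
      using assms by (intro sums_mult geometric_sums) auto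
    moreover have "summable (\<lambda>n. norm ((C * u ^ m) * v ^ n))"
    proof -
      have "summable (\<lambda>n. (C * u ^ m) * v ^ n)"
        using assms by (intro summable_mult summable_geometric) auto
      moreover have "(\<lambda>n. norm ((C * u ^ m) * v ^ n)) = (\<lambda>n. (C * u ^ m) * v ^ n)"
        using assms by (auto simp: abs_mult power_abs)
      ultimately show ?thesis by simp
    qed
    ultimately show "((\<lambda>y. (\<lambda>(m,n). C * u ^ m * v ^ n) (m, y)) has_sum (C * u ^ m * (1 / (1 - v)))) UNIV"
      by (auto intro!: norm_summable_imp_has_sum simp: mult.assoc)
  next
    have "summable (\<lambda>m. C / (1 - v) * u ^ m)"
      using assms by (intro summable_mult summable_geometric) auto
    then show "(\<lambda>m. C * u ^ m * (1 / (1 - v))) summable_on UNIV"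
      using assms by (subst summable_on_UNIV_nonneg_real_iff) (auto simp: field_simps)
  qed (use assms in auto)
  then show ?thesis by simp
qed

lemma trm_summable:
  assumes q: "norm q < 1"
    and nzc: "\<forall>m. qpoch c q m \<noteq> 0" and nzc': "\<forall>m. qpoch c' q m \<noteq> 0"
    and A: "norm a \<le> A" and B: "norm b \<le> B" and B': "norm b' \<le> B'"
    and x: "norm x < RR A B B'" and y: "norm y < RR A B B'"
  shows "trm q a b b' c c' x y summable_on UNIV"
proof -
  have A0: "A \<ge> 0" and B0: "B \<ge> 0" and B'0: "B' \<ge> 0"
    using A B B' norm_ge_zero order_trans by blast+
  obtain dq where dq: "dq > 0" "\<And>m. dq / 2 ^ m \<le> norm (qpoch q q m)"
    using qpoch_lower[of q q] q qpoch_q_nz by blast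
  obtain dc where dc: "dc > 0" "\<And>m. dc / 2 ^ m \<le> norm (qpoch c q m)"
    using qpoch_lower[of q c] q nzc by blast
  obtain dc' where dc': "dc' > 0" "\<And>m. dc' / 2 ^ m \<le> norm (qpoch c' q m)"
    using qpoch_lower[of q c'] q nzc' by blast
  define C where "C = 1 / (dq * dq * dc * dc')"
  define u where "u = 4 * (1 + A) * (1 + B) * norm x"
  define v where "v = 4 * (1 + A) * (1 + B') * norm y"
  have RRpos: "RR A B B' > 0" unfolding RR_def using A0 B0 B'0 by simp
  have u1: "u < 1"
  proof -
    have "u \<le> 4 * (1 + A) * (1 + B) * (1 + B') * norm x"
      unfolding u_def using A0 B0 B'0 by (intro mult_right_mono) auto
    also have "\<dots> < 4 * (1 + A) * (1 + B) * (1 + B') * RR A B B'"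
      using x A0 B0 B'0 by (intro mult_strict_left_mono) auto
    also have "\<dots> = 1" unfolding RR_def using A0 B0 B'0 by simp
    finally show ?thesis .
  qed
  have v1: "v < 1"
  proof -
    have "v \<le> 4 * (1 + A) * (1 + B) * (1 + B') * norm y"
      unfolding v_def using A0 B0 B'0 by (intro mult_right_mono) (auto simp: mult_ac)
    also have "\<dots> < 4 * (1 + A) * (1 + B) * (1 + B') * RR A B B'"
      using y A0 B0 B'0 by (intro mult_strict_left_mono) auto
    also have "\<dots> = 1" unfolding RR_def using A0 B0 B'0 by simp
    finally show ?thesis .
  qed
  have bound: "norm (trm q a b b' c c' x y (m, n)) \<le> C * u ^ m * v ^ n" for m n
  proof -
    define N where "N = norm (qpoch a q (m + n)) * norm (qpoch b q m) * norm (qpoch b' q n)"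
    define D where "D = norm (qpoch q q m) * norm (qpoch q q n) * norm (qpoch c q m) * norm (qpoch c' q n)"
    define N' where "N' = (1 + A) ^ (m + n) * (1 + B) ^ m * (1 + B') ^ n"
    define D' where "D' = (dq / 2 ^ m) * (dq / 2 ^ n) * (dc / 2 ^ m) * (dc' / 2 ^ n)"
    have q1: "norm q \<le> 1" using q by simp
    have N: "N \<le> N'"
    proof -
      have "norm (qpoch a q (m + n)) \<le> (1 + A) ^ (m + n)"
        using norm_qpoch_le[OF q1, of a "m+n"] A by (meson add_left_mono order_trans power_mono norm_ge_zero add_nonneg_nonneg zero_le_one)
      moreover have "norm (qpoch b q m) \<le> (1 + B) ^ m"
        using norm_qpoch_le[OF q1, of b m] B by (meson add_left_mono order_trans power_mono norm_ge_zero add_nonneg_nonneg zero_le_one)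
      moreover have "norm (qpoch b' q n) \<le> (1 + B') ^ n"
        using norm_qpoch_le[OF q1, of b' n] B' by (meson add_left_mono order_trans power_mono norm_ge_zero add_nonneg_nonneg zero_le_one)
      ultimately show ?thesis unfolding N_def N'_def using A0 B0
        by (intro mult_mono) auto
    qed
    have D'pos: "D' > 0" unfolding D'_def using dq dc dc' by simp
    have D: "D' \<le> D" unfolding D_def D'_def
      using dq dc dc' by (intro mult_mono) auto
    have N'0: "N' \<ge> 0" unfolding N'_def using A0 B0 B'0 by simp
    have "norm (trm q a b b' c c' x y (m, n)) = N / D * (norm x ^ m * norm y ^ n)"
      unfolding trm_def N_def D_def by (simp add: norm_mult norm_divide norm_power)
    also have "\<dots> \<le> N' / D' * (norm x ^ m * norm y ^ n)"
      by (intro mult_right_mono frac_le) (use N D D'pos N'0 in auto)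
    also have "\<dots> = C * u ^ m * v ^ n"
    proof -
      have e4: "(4::real) ^ k = 2 ^ k * 2 ^ k" for k
        by (simp add: power_mult_distrib[symmetric])
      show ?thesis
        unfolding N'_def D'_def C_def u_def v_def
        apply (simp only: power_mult_distrib power_add e4)
        using dq(1) dc(1) dc'(1) by (simp add: field_simps)
    qed
    finally show ?thesis .
  qed
  have "(\<lambda>(m,n). C * u ^ m * v ^ n) summable_on UNIV"
    using u1 v1 dq(1) dc(1) dc'(1) A0 B0 B'0 by (intro geom2_summable) (auto simp: C_def u_def v_def)
  then have "(\<lambda>p. norm (trm q a b b' c c' x y p)) summable_on UNIV"
    by (rule summable_on_comparison_test) (use bound in auto)
  then show ?thesis
    using summable_on_iff_abs_summable_on_complex by blast
qed



lemma trm_rel_pt: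
  assumes q: "norm q < 1"
    and nzc: "\<forall>m. qpoch c q m \<noteq> 0" and nzc': "\<forall>m. qpoch c' q m \<noteq> 0"
  shows "trm q a (b * q) b' c c' x y (m, n) = trm q a b b' c c' x y (m, n) +
     (if m = 0 then 0 else b * x * (1 - a) / (1 - c) * trm q (a * q) (b * q) b' (c * q) c' x y (m - 1, n))"
proof (cases m)
  case 0
  then show ?thesis by (simp add: trm_def)
next
  case (Suc k)
  have e1: "qpoch a q (Suc k + n) = (1 - a) * qpoch (a * q) q (k + n)"
    by (simp add: qpoch_Suc')
  have e2: "qpoch (b * q) q (Suc k) = qpoch (b * q) q k * (1 - b * q * q ^ k)"
    by (simp add: qpoch_Suc)
  have e3: "qpoch b q (Suc k) = (1 - b) * qpoch (b * q) q k"
    by (simp add: qpoch_Suc')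
  have e4: "qpoch q q (Suc k) = qpoch q q k * (1 - q * q ^ k)"
    by (simp add: qpoch_Suc)
  have e5: "qpoch c q (Suc k) = (1 - c) * qpoch (c * q) q k"
    by (simp add: qpoch_Suc')
  have n1: "qpoch q q k \<noteq> 0" "1 - q * q ^ k \<noteq> 0" "qpoch q q n \<noteq> 0"
    using qpoch_q_nz[OF q, of "Suc k"] qpoch_q_nz[OF q, of n] e4 by auto
  have n2: "1 - c \<noteq> 0" "qpoch (c * q) q k \<noteq> 0"
    using nzc e5 by (metis mult_eq_0_iff)+
  have n3: "qpoch c' q n \<noteq> 0" using nzc' by auto
  have alg: "\<And>(Q::complex) r Qn c CQ C' a AQ BQ b B' x xk yn. Q \<noteq> 0 \<Longrightarrow> 1 - r \<noteq> 0 \<Longrightarrow> Qn \<noteq> 0 \<Longrightarrow> 1 - c \<noteq> 0 \<Longrightarrow> CQ \<noteq> 0 \<Longrightarrow> C' \<noteq> 0 \<Longrightarrow>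
    (1-a)*AQ * (BQ*(1-b*r)) * B' / (Q*(1-r) * Qn * ((1-c)*CQ) * C') * (x*xk) * yn
    = (1-a)*AQ * ((1-b)*BQ) * B' / (Q*(1-r)*Qn*((1-c)*CQ)*C') * (x*xk)*yn + b*x*(1-a)/(1-c) * (AQ*BQ*B'/(Q*Qn*CQ*C') * xk * yn)"
    apply (simp add: divide_simps)
    apply (simp add: algebra_simps)
    done
  have e6: "b * q * q ^ k = b * (q * q ^ k)" by (simp add: mult.assoc)
  show ?thesis
    unfolding Suc trm_def
    apply (simp only: prod.case e1 e2 e3 e4 e5 if_False Suc_not_Zero diff_Suc_1 e6 power_Suc)
    apply (rule alg)
    using n1 n2 n3 by auto
qed

lemma Phi2_rel:
  assumes q: "norm q < 1"
    and nzc: "\<forall>m. qpoch c q m \<noteq> 0" and nzc': "\<forall>m. qpoch c' q m \<noteq> 0"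
    and s1: "trm q a b b' c c' x y summable_on UNIV"
    and s2: "trm q (a * q) (b * q) b' (c * q) c' x y summable_on UNIV"
  shows "Phi2 q a (b * q) b' c c' x y = Phi2 q a b b' c c' x y +
           b * x * (1 - a) / (1 - c) * Phi2 q (a * q) (b * q) b' (c * q) c' x y"
proof -
  define K where "K = b * x * (1 - a) / (1 - c)"
  define f1 where "f1 = trm q a b b' c c' x y"
  define f2 where "f2 = trm q (a * q) (b * q) b' (c * q) c' x y"
  define g where "g = (\<lambda>(m::nat, n::nat). if m = 0 then 0 else K * f2 (m - 1, n))"
  define h where "h = (\<lambda>(m::nat, n::nat). (Suc m, n))"
  have h1: "(f1 has_sum Phi2 q a b b' c c' x y) UNIV"
    using s1 unfolding f1_def Phi2_trm by simp
  have h2: "(f2 has_sum Phi2 q (a * q) (b * q) b' (c * q) c' x y) UNIV"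
    using s2 unfolding f2_def Phi2_trm by simp
  have "((\<lambda>p. K * f2 p) has_sum (K * Phi2 q (a * q) (b * q) b' (c * q) c' x y)) UNIV"
    using h2 by (rule has_sum_cmult_right)
  moreover have "(\<lambda>p. K * f2 p) = g \<circ> h"
    by (auto simp: g_def h_def fun_eq_iff)
  ultimately have "(g has_sum (K * Phi2 q (a * q) (b * q) b' (c * q) c' x y)) (h ` UNIV)"
    by (subst has_sum_reindex) (auto simp: inj_on_def h_def)
  then have hg: "(g has_sum (K * Phi2 q (a * q) (b * q) b' (c * q) c' x y)) UNIV"
  proof (rule has_sum_cong_neutral[THEN iffD1, rotated -1])
    fix p assume "p \<in> UNIV - h ` UNIV"
    then obtain m n where p: "p = (m, n)" and "p \<notin> h ` UNIV" by (cases p) auto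
    then have "m = 0" unfolding h_def
      by (metis (no_types, lifting) case_prod_conv not0_implies_Suc rangeI)
    then show "g p = 0" using p by (simp add: g_def)
  qed auto
  have "((\<lambda>p. f1 p + g p) has_sum (Phi2 q a b b' c c' x y + K * Phi2 q (a * q) (b * q) b' (c * q) c' x y)) UNIV"
    using h1 hg by (rule has_sum_add)
  moreover have "(\<lambda>p. f1 p + g p) = trm q a (b * q) b' c c' x y"
  proof
    fix p :: "nat \<times> nat"
    obtain m n where p: "p = (m, n)" by (cases p)
    show "f1 p + g p = trm q a (b * q) b' c c' x y p"
      unfolding p f1_def g_def f2_def K_def prod.case
      by (rule trm_rel_pt[OF q nzc nzc', symmetric])
  qed
  ultimately have "(trm q a (b * q) b' c c' x y has_sum
      (Phi2 q a b b' c c' x y + K * Phi2 q (a * q) (b * q) b' (c * q) c' x y)) UNIV"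
    by simp
  then have "infsum (trm q a (b * q) b' c c' x y) UNIV =
      Phi2 q a b b' c c' x y + K * Phi2 q (a * q) (b * q) b' (c * q) c' x y"
    by (rule infsumI)
  then show ?thesis unfolding K_def Phi2_trm[of q a "b * q"] .
qed



lemma qbinom_0: "norm q < 1 \<Longrightarrow> qbinom q n 0 = 1"
  using qpoch_q_nz[of q n] by (simp add: qbinom_def)

lemma qbinom_n: "norm q < 1 \<Longrightarrow> qbinom q n n = 1"
  using qpoch_q_nz[of q n] by (simp add: qbinom_def)

lemma qbinom_pascal:
  assumes q: "norm q < 1" and k: "k < n"
  shows "qbinom q (Suc n) (Suc k) = qbinom q n (Suc k) * (q * q ^ k) + qbinom q n k"
    and "qbinom q (Suc n) (Suc k) = qbinom q n (Suc k) + (q * q ^ (n - Suc k)) * qbinom q n k"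
proof -
  define d where "d = n - Suc k"
  have n: "n = k + Suc d" using k unfolding d_def by simp
  have s1: "Suc n - Suc k = Suc d" "n - Suc k = d" "n - k = Suc d" using n by auto
  have qn: "q ^ n = q ^ k * q * q ^ d" using n by (simp add: power_add mult_ac)
  have nz: "qpoch q q k \<noteq> 0" "qpoch q q d \<noteq> 0" "1 - q * q ^ k \<noteq> 0" "1 - q * q ^ d \<noteq> 0"
    using qpoch_q_nz[OF q, of k] qpoch_q_nz[OF q, of d] qpoch_q_nz[OF q, of "Suc k"] qpoch_q_nz[OF q, of "Suc d"]
    by (auto simp: qpoch_Suc)
  define Qn where "Qn = qpoch q q n"
  define Qk where "Qk = qpoch q q k"
  define Qd where "Qd = qpoch q q d"
  define t where "t = q ^ k"
  define s where "s = q ^ d"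
  have E: "qbinom q (Suc n) (Suc k) = Qn * (1 - q * (t * q * s)) / ((Qk * (1 - q * t)) * (Qd * (1 - q * s)))"
          "qbinom q n (Suc k) = Qn / ((Qk * (1 - q * t)) * Qd)"
          "qbinom q n k = Qn / (Qk * (Qd * (1 - q * s)))"
    unfolding qbinom_def s1 Qn_def Qk_def Qd_def t_def s_def
    by (simp_all only: qpoch_Suc qn)
  have nz': "Qk \<noteq> 0" "Qd \<noteq> 0" "1 - q * t \<noteq> 0" "1 - q * s \<noteq> 0"
    using nz unfolding Qk_def Qd_def t_def s_def by auto
  show "qbinom q (Suc n) (Suc k) = qbinom q n (Suc k) * (q * q ^ k) + qbinom q n k"
    unfolding E t_def[symmetric] using nz'
    by (simp add: divide_simps) (simp add: algebra_simps)
  show "qbinom q (Suc n) (Suc k) = qbinom q n (Suc k) + (q * q ^ (n - Suc k)) * qbinom q n k"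
    unfolding E s1 s_def[symmetric] using nz'
    by (simp add: divide_simps) (simp add: algebra_simps)
qed

lemma sum_combine:
  fixes \<alpha> \<beta> \<gamma> T :: "nat \<Rightarrow> complex"
  assumes "\<gamma> 0 = \<alpha> 0" "\<And>k. k < n \<Longrightarrow> \<gamma> (Suc k) = \<alpha> (Suc k) + \<alpha> k * \<beta> k"
    "\<gamma> (Suc n) = \<alpha> n * \<beta> n"
  shows "(\<Sum>k\<le>n. \<alpha> k * (T k + \<beta> k * T (Suc k))) = (\<Sum>k\<le>Suc n. \<gamma> k * T k)"
proof -
  have L1: "(\<Sum>k\<le>n. \<alpha> k * T k) = \<alpha> 0 * T 0 + (\<Sum>k<n. \<alpha> (Suc k) * T (Suc k))"
    by (rule sum.atMost_shift)
  have L2: "(\<Sum>k\<le>n. \<alpha> k * \<beta> k * T (Suc k)) = (\<Sum>k<n. \<alpha> k * \<beta> k * T (Suc k)) + \<alpha> n * \<beta> n * T (Suc n)"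
    unfolding lessThan_Suc_atMost[symmetric] by simp
  have R: "(\<Sum>k\<le>Suc n. \<gamma> k * T k) = \<gamma> 0 * T 0 + (\<Sum>k<n. \<gamma> (Suc k) * T (Suc k)) + \<gamma> (Suc n) * T (Suc n)"
    by (subst sum.atMost_shift) (simp add: add.assoc)
  have M: "(\<Sum>k<n. \<gamma> (Suc k) * T (Suc k)) = (\<Sum>k<n. \<alpha> (Suc k) * T (Suc k)) + (\<Sum>k<n. \<alpha> k * \<beta> k * T (Suc k))"
    unfolding sum.distrib[symmetric] by (rule sum.cong) (auto simp: assms(2) algebra_simps)
  have "(\<Sum>k\<le>n. \<alpha> k * (T k + \<beta> k * T (Suc k))) = (\<Sum>k\<le>n. \<alpha> k * T k) + (\<Sum>k\<le>n. \<alpha> k * \<beta> k * T (Suc k))"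
    unfolding sum.distrib[symmetric] by (simp add: algebra_simps)
  then show ?thesis using L1 L2 R M assms(1,3) by simp
qed



lemma norm_mult_qpow_le: fixes a q :: complex shows "norm q \<le> 1 \<Longrightarrow> norm (a * q ^ k) \<le> norm a"
  by (simp add: norm_mult norm_power mult_left_le power_le_one)

lemma qpoch_shift_nz: "\<forall>m. qpoch c q m \<noteq> 0 \<Longrightarrow> \<forall>m. qpoch (c * q ^ k) q m \<noteq> 0"
  using qpoch_add[of c q] by (metis mult_eq_0_iff)

lemma choose2_Suc: "Suc k choose 2 = (k choose 2) + k"
  by (simp add: numeral_2_eq_2)

lemma mult_qpow_Suc: fixes z q :: complex shows "z * q ^ k * q = z * q ^ Suc k"
  by (simp add: mult_ac)

lemma pow2_add: fixes q :: complex shows "q ^ (2 * (m + k)) = q ^ (2 * m) * q ^ k * q ^ k"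
proof -
  have "2 * (m + k) = 2 * m + k + k" by simp
  then show ?thesis by (simp only: power_add)
qed

lemma ident1:
  fixes q b' c' x y :: complex and A B :: real
  assumes q: "norm q < 1" and nzc': "\<forall>m. qpoch c' q m \<noteq> 0"
    and x: "norm x < RR A B (norm b')" and y: "norm y < RR A B (norm b')"
  shows "norm a \<le> A \<Longrightarrow> norm b \<le> B \<Longrightarrow> \<forall>m. qpoch c q m \<noteq> 0 \<Longrightarrow>
    Phi2 q a (b * q ^ n) b' c c' x y =
      (\<Sum>k\<le>n. qbinom q n k * q ^ (2 * (k choose 2)) *
               ((b * x) ^ k * qpoch a q k / qpoch c q k) *
               Phi2 q (a * q ^ k) (b * q ^ k) b' (c * q ^ k) c' x y)"
proof (induction n arbitrary: a b c)
  case 0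
  show ?case by (simp add: qbinom_0[OF q] binomial_eq_0)
next
  case (Suc n)
  have q1: "norm q \<le> 1" using q by simp
  note nzc = Suc.prems(3)
  have S: "trm q (a * q ^ k) (b * q ^ k) b' (c * q ^ k) c' x y summable_on UNIV" for k
    using trm_summable[OF q qpoch_shift_nz[OF nzc] nzc', of "a * q ^ k" A "b * q ^ k" B b' "norm b'" x y]
      order_trans[OF norm_mult_qpow_le[OF q1] Suc.prems(1)] order_trans[OF norm_mult_qpow_le[OF q1] Suc.prems(2)]
      x y by simp
  define T where "T k = Phi2 q (a * q ^ k) (b * q ^ k) b' (c * q ^ k) c' x y" for k
  have rel: "Phi2 q (a * q ^ k) (b * q * q ^ k) b' (c * q ^ k) c' x y =
      T k + b * q ^ k * x * (1 - a * q ^ k) / (1 - c * q ^ k) * T (Suc k)" for k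
  proof -
    have "Phi2 q (a * q ^ k) (b * q ^ k * q) b' (c * q ^ k) c' x y =
       Phi2 q (a * q ^ k) (b * q ^ k) b' (c * q ^ k) c' x y +
       b * q ^ k * x * (1 - a * q ^ k) / (1 - c * q ^ k) *
       Phi2 q (a * q ^ k * q) (b * q ^ k * q) b' (c * q ^ k * q) c' x y"
      by (rule Phi2_rel[OF q qpoch_shift_nz[OF nzc] nzc' S]) (use S[of "Suc k"] in \<open>simp only: mult_qpow_Suc\<close>)
    moreover have "b * q ^ k * q = b * q * q ^ k" by (simp add: mult_ac)
    ultimately show ?thesis unfolding T_def mult_qpow_Suc by (simp add: mult.assoc)
  qed
  have IH: "Phi2 q a (b * q * q ^ n) b' c c' x y =
      (\<Sum>k\<le>n. qbinom q n k * q ^ (2 * (k choose 2)) *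
               ((b * q * x) ^ k * qpoch a q k / qpoch c q k) *
               Phi2 q (a * q ^ k) (b * q * q ^ k) b' (c * q ^ k) c' x y)"
    using Suc.IH[of a "b * q" c] Suc.prems order_trans[OF norm_mult_qpow_le[OF q1, of b 1]] by simp
  define \<alpha> where "\<alpha> k = qbinom q n k * q ^ (2 * (k choose 2)) * ((b * q * x) ^ k * qpoch a q k / qpoch c q k)" for k
  define \<beta> where "\<beta> k = b * q ^ k * x * (1 - a * q ^ k) / (1 - c * q ^ k)" for k
  define \<gamma> where "\<gamma> k = qbinom q (Suc n) k * q ^ (2 * (k choose 2)) * ((b * x) ^ k * qpoch a q k / qpoch c q k)" for k
  have "Phi2 q a (b * q ^ Suc n) b' c c' x y = Phi2 q a (b * q * q ^ n) b' c c' x y"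
    by (simp add: mult_ac)
  also have "\<dots> = (\<Sum>k\<le>n. \<alpha> k * (T k + \<beta> k * T (Suc k)))"
    unfolding IH rel \<alpha>_def \<beta>_def ..
  also have "\<dots> = (\<Sum>k\<le>Suc n. \<gamma> k * T k)"
  proof (rule sum_combine)
    show "\<gamma> 0 = \<alpha> 0" unfolding \<alpha>_def \<gamma>_def by (simp add: qbinom_0[OF q])
  next
    fix k assume k: "k < n"
    have nz: "qpoch c q k \<noteq> 0" "1 - c * q ^ k \<noteq> 0"
      using nzc qpoch_Suc[of c q k] by (metis mult_eq_0_iff)+
    show "\<gamma> (Suc k) = \<alpha> (Suc k) + \<alpha> k * \<beta> k"
      unfolding \<alpha>_def \<beta>_def \<gamma>_def qbinom_pascal(1)[OF q k] choose2_Suc qpoch_Suc pow2_add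
      using nz by (simp add: power_add power_mult_distrib divide_simps) (simp add: algebra_simps)
  next
    have nz: "qpoch c q n \<noteq> 0" "1 - c * q ^ n \<noteq> 0"
      using nzc qpoch_Suc[of c q n] by (metis mult_eq_0_iff)+
    show "\<gamma> (Suc n) = \<alpha> n * \<beta> n"
      unfolding \<alpha>_def \<beta>_def \<gamma>_def qbinom_n[OF q] choose2_Suc qpoch_Suc pow2_add
      using nz by (simp add: power_add power_mult_distrib divide_simps)
  qed
  finally show ?case unfolding \<gamma>_def T_def .
qed



lemma pow_SS: fixes q :: complex shows "q ^ (Suc n * Suc k) = q ^ (n * k) * q ^ n * q ^ k * q"
proof -
  have "Suc n * Suc k = n * k + n + k + 1" by simp
  then show ?thesis by (simp only: power_add power_one_right)
qed

lemma pow_nS: fixes q :: complex shows "q ^ (n * Suc k) = q ^ (n * k) * q ^ n"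
  by (simp add: power_add mult_ac)

lemma coef2:
  fixes q t s W Ck c N1 N0 P b x Y Ak a :: complex
  assumes "q \<noteq> 0" "t \<noteq> 0" "s \<noteq> 0" "W \<noteq> 0" "Ck \<noteq> 0" "1 - c * t \<noteq> 0"
  shows "(N1 + q * s * N0) *
     (P * t /
      ((W * t) * (q * (t * q * s)))) *
     (- b * x * Y * (Ak * (1 - a * t)) /
      (Ck * (1 - c * t))) =
     N1 *
     (P * t / (W * (t * q * s))) *
     (- (b / q) * x * (Y / t) *
      (Ak * (1 - a * t)) /
      (Ck * (1 - c * t))) +
     N0 * (P / W) *
     (Y / t * Ak / Ck) *
     (- (b / q) * x * (1 - a * t) /
      (1 - c * t))"
  using assms by (simp add: divide_simps) (simp add: algebra_simps)
lemma coef2n: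
  fixes q t W Ck c P b x Y Ak a :: complex
  assumes "q \<noteq> 0" "t \<noteq> 0" "W \<noteq> 0" "Ck \<noteq> 0" "1 - c * t \<noteq> 0"
  shows "1 * (P * t / (W * t * (q * t))) *
     (- b * x * Y * (Ak * (1 - a * t)) / (Ck * (1 - c * t))) =
     1 * (P / W) * (Y / t * Ak / Ck) * (- (b / q) * x * (1 - a * t) / (1 - c * t))"
  using assms by (simp add: divide_simps)

lemma pow_Sn: fixes q :: complex shows "q ^ (Suc n * k) = q ^ (n * k) * q ^ k"
  by (simp add: power_add mult_ac)

lemma ident2:
  fixes q b' c' x y :: complex and A B :: real
  assumes q: "norm q < 1" "q \<noteq> 0" and nzc': "\<forall>m. qpoch c' q m \<noteq> 0"
    and x: "norm x < RR A B (norm b')" and y: "norm y < RR A B (norm b')"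
  shows "norm a \<le> A \<Longrightarrow> norm b \<le> B * norm q ^ n \<Longrightarrow> \<forall>m. qpoch c q m \<noteq> 0 \<Longrightarrow>
    Phi2 q a (b / q ^ n) b' c c' x y =
      (\<Sum>k\<le>n. qbinom q n k * (q ^ (k choose 2) / q ^ (n * k)) *
               ((- b * x) ^ k * qpoch a q k / qpoch c q k) *
               Phi2 q (a * q ^ k) b b' (c * q ^ k) c' x y)"
proof (induction n arbitrary: a b c)
  case 0
  show ?case by (simp add: qbinom_0[OF q(1)] binomial_eq_0)
next
  case (Suc n)
  have q1: "norm q \<le> 1" using q by simp
  have qpos: "norm q > 0" using q by simp
  note nzc = Suc.prems(3)
  have nb: "norm b \<le> B" and nbq: "norm (b / q) \<le> B * norm q ^ n" and nbq': "norm (b / q) \<le> B"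
  proof -
    have h0: "0 \<le> B * norm q ^ Suc n" using Suc.prems(2) by (meson norm_ge_zero order_trans)
    have h1: "norm q ^ Suc n > 0" using qpos by simp
    have B0: "B \<ge> 0" using h0 h1 by (simp add: zero_le_mult_iff)
    have "norm (b / q) = norm b / norm q" by (simp add: norm_divide)
    also have "\<dots> \<le> B * norm q ^ Suc n / norm q" by (rule divide_right_mono) (use Suc.prems(2) qpos in auto)
    also have "\<dots> = B * norm q ^ n" using qpos by simp
    finally show nbq: "norm (b / q) \<le> B * norm q ^ n" .
    have "norm q ^ n \<le> 1" using q1 by (simp add: power_le_one)
    then have "B * norm q ^ n \<le> B" using B0 by (simp add: mult_left_le)
    then show "norm (b / q) \<le> B" using nbq by simp
    have "norm q ^ Suc n \<le> 1" using q1 by (intro power_le_one) auto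
    then have "B * norm q ^ Suc n \<le> B" using B0 by (simp add: mult_left_le)
    then show "norm b \<le> B" using Suc.prems(2) by simp
  qed
  have SUM: "norm bb \<le> B \<Longrightarrow> trm q (a * q ^ k) bb b' (c * q ^ k) c' x y summable_on UNIV" for k bb
    using trm_summable[OF q(1) qpoch_shift_nz[OF nzc] nzc', of "a * q ^ k" A bb B b' "norm b'" x y]
      order_trans[OF norm_mult_qpow_le[OF q1] Suc.prems(1)] x y by simp
  define S where "S k = Phi2 q (a * q ^ k) b b' (c * q ^ k) c' x y" for k
  have rel: "Phi2 q (a * q ^ k) (b / q) b' (c * q ^ k) c' x y =
      S k + (- (b / q) * x * (1 - a * q ^ k) / (1 - c * q ^ k)) * S (Suc k)" for k
  proof -
    have "Phi2 q (a * q ^ k) (b / q * q) b' (c * q ^ k) c' x y =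
       Phi2 q (a * q ^ k) (b / q) b' (c * q ^ k) c' x y +
       b / q * x * (1 - a * q ^ k) / (1 - c * q ^ k) *
       Phi2 q (a * q ^ k * q) (b / q * q) b' (c * q ^ k * q) c' x y"
      by (rule Phi2_rel[OF q(1) qpoch_shift_nz[OF nzc] nzc' SUM[OF nbq']])
         (use SUM[OF nb, of "Suc k"] q(2) in \<open>simp add: mult_qpow_Suc\<close>)
    moreover have "b / q * q = b" using q(2) by simp
    ultimately have F': "S k = Phi2 q (a * q ^ k) (b / q) b' (c * q ^ k) c' x y +
       b / q * x * (1 - a * q ^ k) / (1 - c * q ^ k) * S (Suc k)"
      unfolding S_def mult_qpow_Suc by simp
    have "- (b / q) * x * (1 - a * q ^ k) / (1 - c * q ^ k) = - (b / q * x * (1 - a * q ^ k) / (1 - c * q ^ k))"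
      by simp
    then show ?thesis using F' by (simp only:) (simp add: algebra_simps)
  qed
  have IH: "Phi2 q a (b / q / q ^ n) b' c c' x y =
      (\<Sum>k\<le>n. qbinom q n k * (q ^ (k choose 2) / q ^ (n * k)) *
               ((- (b / q) * x) ^ k * qpoch a q k / qpoch c q k) *
               Phi2 q (a * q ^ k) (b / q) b' (c * q ^ k) c' x y)"
    using Suc.IH[of a "b / q" c] Suc.prems(1,3) nbq by simp
  define \<alpha> where "\<alpha> k = qbinom q n k * (q ^ (k choose 2) / q ^ (n * k)) *
               ((- (b / q) * x) ^ k * qpoch a q k / qpoch c q k)" for k
  define \<beta> where "\<beta> k = - (b / q) * x * (1 - a * q ^ k) / (1 - c * q ^ k)" for k
  define \<gamma> where "\<gamma> k = qbinom q (Suc n) k * (q ^ (k choose 2) / q ^ (Suc n * k)) *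
               ((- b * x) ^ k * qpoch a q k / qpoch c q k)" for k
  have "Phi2 q a (b / q ^ Suc n) b' c c' x y = Phi2 q a (b / q / q ^ n) b' c c' x y"
    by (simp add: field_simps)
  also have "\<dots> = (\<Sum>k\<le>n. \<alpha> k * (S k + \<beta> k * S (Suc k)))"
    unfolding IH rel \<alpha>_def \<beta>_def ..
  also have "\<dots> = (\<Sum>k\<le>Suc n. \<gamma> k * S k)"
  proof (rule sum_combine)
    show "\<gamma> 0 = \<alpha> 0" unfolding \<alpha>_def \<gamma>_def by (simp add: qbinom_0[OF q(1)])
  next
    fix k assume k: "k < n"
    define d where "d = n - Suc k"
    have nd: "n = k + Suc d" using k unfolding d_def by simp
    have qn: "q ^ n = q ^ k * q * q ^ d" using nd by (simp add: power_add mult_ac)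
    have nz: "qpoch c q k \<noteq> 0" "1 - c * q ^ k \<noteq> 0"
      using nzc qpoch_Suc[of c q k] by (metis mult_eq_0_iff)+
    have pw: "(- (b / q) * x) ^ j = (- b * x) ^ j / q ^ j" for j
      by (simp add: power_divide[symmetric])
    show "\<gamma> (Suc k) = \<alpha> (Suc k) + \<alpha> k * \<beta> k"
      unfolding \<alpha>_def \<beta>_def \<gamma>_def qbinom_pascal(2)[OF q(1) k] choose2_Suc qpoch_Suc pow_SS pow_nS
        power_add pw d_def[symmetric] qn power_Suc pow_Sn
      by (rule coef2) (use nz q(2) in auto)
  next
    have nz: "qpoch c q n \<noteq> 0" "1 - c * q ^ n \<noteq> 0"
      using nzc qpoch_Suc[of c q n] by (metis mult_eq_0_iff)+
    have pw: "(- (b / q) * x) ^ j = (- b * x) ^ j / q ^ j" for j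
      by (simp add: power_divide[symmetric])
    show "\<gamma> (Suc n) = \<alpha> n * \<beta> n"
      unfolding \<alpha>_def \<beta>_def \<gamma>_def qbinom_n[OF q(1)] choose2_Suc qpoch_Suc pow_SS pow_nS power_add pw
        power_Suc pow_Sn
      by (rule coef2n) (use nz q(2) in auto)
  qed
  finally show ?case unfolding \<gamma>_def S_def .
qed



lemma RR_pos: "A \<ge> 0 \<Longrightarrow> B \<ge> 0 \<Longrightarrow> B' \<ge> 0 \<Longrightarrow> RR A B B' > 0"
  unfolding RR_def by simp

theorem theorem9:
  fixes q a b b' c c' :: complex and n :: nat
  assumes "0 < norm q" and "norm q < 1"
    and "\<forall>m. qpoch c q m \<noteq> 0" and "\<forall>m. qpoch c' q m \<noteq> 0"
  shows "(\<exists>r>0. \<forall>x y. norm x < r \<and> norm y < r \<longrightarrow>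
            Phi2 q a (b * q ^ n) b' c c' x y =
            (\<Sum>k\<le>n. qbinom q n k * q ^ (2 * (k choose 2)) *
               ((b * x) ^ k * qpoch a q k / qpoch c q k) *
               Phi2 q (a * q ^ k) (b * q ^ k) b' (c * q ^ k) c' x y))
       \<and> (\<exists>r>0. \<forall>x y. norm x < r \<and> norm y < r \<longrightarrow>
            Phi2 q a (b * q powi (- int n)) b' c c' x y =
            (\<Sum>k\<le>n. qbinom q n k * q powi (int (k choose 2) - int (n * k)) *
               ((- b * x) ^ k * qpoch a q k / qpoch c q k) *
               Phi2 q (a * q ^ k) b b' (c * q ^ k) c' x y))"
proof
  have q: "norm q < 1" "q \<noteq> 0" using assms(1,2) by auto
  note nzc = assms(3) and nzc' = assms(4)
  show "\<exists>r>0. \<forall>x y. norm x < r \<and> norm y < r \<longrightarrow>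
            Phi2 q a (b * q ^ n) b' c c' x y =
            (\<Sum>k\<le>n. qbinom q n k * q ^ (2 * (k choose 2)) *
               ((b * x) ^ k * qpoch a q k / qpoch c q k) *
               Phi2 q (a * q ^ k) (b * q ^ k) b' (c * q ^ k) c' x y)"
  proof (intro exI[of _ "RR (norm a) (norm b) (norm b')"] conjI allI impI)
    show "RR (norm a) (norm b) (norm b') > 0" by (intro RR_pos) auto
  next
    fix x y :: complex assume "norm x < RR (norm a) (norm b) (norm b') \<and> norm y < RR (norm a) (norm b) (norm b')"
    then show "Phi2 q a (b * q ^ n) b' c c' x y =
            (\<Sum>k\<le>n. qbinom q n k * q ^ (2 * (k choose 2)) *
               ((b * x) ^ k * qpoch a q k / qpoch c q k) *
               Phi2 q (a * q ^ k) (b * q ^ k) b' (c * q ^ k) c' x y)"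
      using ident1[OF q(1) nzc', where x=x and y=y and A="norm a" and B="norm b" and a=a and b=b and c=c and n=n and b'=b'] nzc by auto
  qed
  define B2 where "B2 = norm b / norm q ^ n"
  have B2: "norm b \<le> B2 * norm q ^ n" "B2 \<ge> 0" using q unfolding B2_def by auto
  have e1: "b * q powi (- int n) = b / q ^ n" by (simp add: power_int_minus divide_inverse)
  have e2: "q powi (int (k choose 2) - int (n * k)) = q ^ (k choose 2) / q ^ (n * k)" for k
  proof -
    have "q powi (int (k choose 2) - int (n * k)) = q powi (int (k choose 2)) / q powi (int (n * k))"
      using q(2) by (rule power_int_diff[OF disjI1])
    then show ?thesis by (simp only: power_int_of_nat)
  qed
  show "\<exists>r>0. \<forall>x y. norm x < r \<and> norm y < r \<longrightarrow>
            Phi2 q a (b * q powi (- int n)) b' c c' x y =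
            (\<Sum>k\<le>n. qbinom q n k * q powi (int (k choose 2) - int (n * k)) *
               ((- b * x) ^ k * qpoch a q k / qpoch c q k) *
               Phi2 q (a * q ^ k) b b' (c * q ^ k) c' x y)"
    unfolding e1 e2
  proof (intro exI[of _ "RR (norm a) B2 (norm b')"] conjI allI impI)
    show "RR (norm a) B2 (norm b') > 0" using B2 by (intro RR_pos) auto
  next
    fix x y :: complex assume "norm x < RR (norm a) B2 (norm b') \<and> norm y < RR (norm a) B2 (norm b')"
    then show "Phi2 q a (b / q ^ n) b' c c' x y =
            (\<Sum>k\<le>n. qbinom q n k * (q ^ (k choose 2) / q ^ (n * k)) *
               ((- b * x) ^ k * qpoch a q k / qpoch c q k) *
               Phi2 q (a * q ^ k) b b' (c * q ^ k) c' x y)"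
      using ident2[OF q nzc', where x=x and y=y and A="norm a" and B=B2 and a=a and b=b and c=c and n=n and b'=b'] nzc B2 by auto
  qed
qed


end
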